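(* Let $F=\{f_i\}_{i=1}^N$ be a uniform Parseval frame for an $n$-dimensional Hilbert space $\mathcal{H}_n$, and let $p>1$. Then $\mathrm{AE}_{\mathcal{N}}^{(1),p}(F)=\frac nN$, and the canonical dual $S_F^{-1}F$ is the unique $1$-erasure numerically optimal dual of $F$, i.e. $\zeta_{\mathcal{N}}^{(1),p}(F)=\{S_F^{-1}F\}$.
   Context: A uniform Parseval frame is a frame $\{f_i\}$ with $\sum_i|\langle f,f_i\rangle|^2=\|f\|^2$ for all $f$ and all $\|f_i\|$ equal; then $S_F=I$ and $S_F^{-1}F=F$. $G=\{g_i\}_{i=1}^N$ is a dual of $F$ if $f=\sum_i\langle f,f_i\rangle g_i$ for all $f$. The numerical radius of an operator $T$ is $\omega(T)=\sup\{|\langle Tf,f\rangle|:\|f\|=1\}$. With $T_F f=(\langle f,f_i\rangle)_i$ the analysis operator and $\mathcal{D}^{(1)}$ the $N\times N$ diagonal matrices with exactly one diagonal entry $1$ and the rest $0$, define $\mathrm{AE}_{\mathcal{N}}^{(1),p}(F,G)=\{\frac1N\sum_{D\in\mathcal{D}^{(1)}}\omega(T_G^*DT_F)^p\}^{1/p}$; here $T_G^*DT_F$ is the operator $f\mapsto\langle f,f_i\rangle g_i$, whose numerical radius is $\frac{|\langle f_i,g_i\rangle|+\|f_i\|\|g_i\|}{2}$. $\mathrm{AE}_{\mathcal{N}}^{(1),p}(F)$ is the infimum of $\mathrm{AE}_{\mathcal{N}}^{(1),p}(F,G)$ over all duals $G$, and $\zeta_{\mathcal{N}}^{(1),p}(F)$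 is the set of duals attaining it. *)

theory Defs
  imports "HOL-Analysis.Analysis"
begin

text \<open>The n-dimensional Hilbert space H_n is modelled as complex ^ 'n (n = CARD('n)),
  with the standard inner product, linear in the first argument.
  A family of N vectors is modelled as a function 'm \<Rightarrow> complex ^ 'n with N = CARD('m).\<close>

definition cinner :: "complex ^ 'n \<Rightarrow> complex ^ 'n \<Rightarrow> complex" where
  "cinner x y = (\<Sum>j\<in>UNIV. x $ j * cnj (y $ j))"

definition cnorm :: "complex ^ 'n \<Rightarrow> real" where
  "cnorm x = sqrt (Re (cinner x x))"

definition parseval_frame :: "('m::finite \<Rightarrow> complex ^ 'n) \<Rightarrow> bool" where
  "parseval_frame F \<longleftrightarrow> (\<forall>f. (\<Sum>i\<in>UNIV. (cmod (cinner f (F i)))\<^sup>2) = (cnorm f)\<^sup>2)"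

definition uniform_frame :: "('m::finite \<Rightarrow> complex ^ 'n) \<Rightarrow> bool" where
  "uniform_frame F \<longleftrightarrow> (\<forall>i j. cnorm (F i) = cnorm (F j))"

definition is_dual :: "('m::finite \<Rightarrow> complex ^ 'n) \<Rightarrow> ('m \<Rightarrow> complex ^ 'n) \<Rightarrow> bool" where
  "is_dual F G \<longleftrightarrow> (\<forall>f. f = (\<Sum>i\<in>UNIV. cinner f (F i) *s G i))"

definition numerical_radius :: "(complex ^ 'n \<Rightarrow> complex ^ 'n) \<Rightarrow> real" where
  "numerical_radius T = (SUP f\<in>{f. cnorm f = 1}. cmod (cinner (T f) f))"

text \<open>The operator T_G^* D T_F for D the diagonal matrix with single 1 at position i.\<close>
definition erasure_op :: "('m \<Rightarrow> complex ^ 'n) \<Rightarrow> ('m \<Rightarrow> complex ^ 'n) \<Rightarrow> 'm \<Rightarrow> complex ^ 'n \<Rightarrow> complex ^ 'n" where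
  "erasure_op F G i = (\<lambda>f. cinner f (F i) *s G i)"

definition AE1 :: "real \<Rightarrow> ('m::finite \<Rightarrow> complex ^ 'n) \<Rightarrow> ('m \<Rightarrow> complex ^ 'n) \<Rightarrow> real" where
  "AE1 p F G = ((1 / real CARD('m)) * (\<Sum>i\<in>UNIV. numerical_radius (erasure_op F G i) powr p)) powr (1 / p)"

definition AE1_opt :: "real \<Rightarrow> ('m::finite \<Rightarrow> complex ^ 'n) \<Rightarrow> real" where
  "AE1_opt p F = (INF G\<in>{G. is_dual F G}. AE1 p F G)"

definition zeta1 :: "real \<Rightarrow> ('m::finite \<Rightarrow> complex ^ 'n) \<Rightarrow> ('m \<Rightarrow> complex ^ 'n) set" where
  "zeta1 p F = {G. is_dual F G \<and> AE1 p F G = AE1_opt p F}"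

end

theory Submission
  imports Defs
begin

lemma cinner_comm: "cinner y x = cnj (cinner x y)"
  by (simp add: cinner_def mult.commute)
lemma cinner_add_left: "cinner (x + y) z = cinner x z + cinner y z"
  by (simp add: cinner_def distrib_right sum.distrib)
lemma cinner_add_right: "cinner x (y + z) = cinner x y + cinner x z"
  by (simp add: cinner_def distrib_left sum.distrib)
lemma cinner_diff_left: "cinner (x - y) z = cinner x z - cinner y z"
  by (simp add: cinner_def left_diff_distrib sum_subtractf)
lemma cinner_scale_left: "cinner (c *s x) y = c * cinner x y"
  by (simp add: cinner_def sum_distrib_left mult.assoc)
lemma cinner_scale_right: "cinner x (c *s y) = cnj c * cinner x y"
  by (simp add: cinner_def sum_distrib_left algebra_simps)
lemma cinner_sum_left: "cinner (\<Sum>i\<in>A. X i) y = (\<Sum>i\<in>A. cinner (X i) y)"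
  by (simp add: cinner_def sum_component sum_distrib_right sum.swap[of _ A])
lemma norm_sq_vec: "(norm (x::complex^'n))\<^sup>2 = (\<Sum>j\<in>UNIV. (cmod (x $ j))\<^sup>2)"
  by (simp add: norm_vec_def L2_set_def sum_nonneg)
lemma cinner_self: "cinner x x = complex_of_real ((norm x)\<^sup>2)"
  by (simp add: cinner_def norm_sq_vec complex_mult_cnj cmod_power2)
lemma cnorm_eq: "cnorm x = norm x"
  by (simp add: cnorm_def cinner_self)
lemma Re_cinner: "Re (cinner x y) = inner x y"
  by (simp add: cinner_def inner_vec_def inner_complex_def Re_sum)
lemma norm_scale: "norm (c *s x) = cmod c * norm (x::complex^'n)"
proof -
  have "(norm (c *s x))\<^sup>2 = (cmod c * norm x)\<^sup>2"
    using cinner_self[of "c *s x"] cinner_self[of x]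
    by (simp add: cinner_scale_left cinner_scale_right power_mult_distrib)
      (metis Re_complex_of_real complex_norm_square mult.assoc mult.commute of_real_mult of_real_power)
  then show ?thesis by (simp add: power2_eq_iff_nonneg)
qed
lemma cauchy: "cmod (cinner x y) \<le> norm x * norm y"
proof (cases "cinner x y = 0")
  case True then show ?thesis by simp
next
  case False
  define z where "z = cinner x y"
  define c where "c = cnj z / cmod z"
  have "cmod c = 1" using False by (simp add: c_def z_def norm_divide)
  have zn: "z \<noteq> 0" using False by (simp add: z_def)
  have "cnj z * z = (complex_of_real (cmod z))^2"
    by (metis complex_norm_square mult.commute of_real_power)
  then have "c * z = cmod z" using zn unfolding c_def
    by (simp add: power2_eq_square)
  then have "cmod z = Re (cinner (c *s x) y)" by (simp add: cinner_scale_left z_def)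
  also have "\<dots> = inner (c *s x) y" by (rule Re_cinner)
  also have "\<dots> \<le> norm (c *s x) * norm y" by (rule norm_cauchy_schwarz)
  also have "\<dots> = norm x * norm y" using \<open>cmod c = 1\<close> by (simp add: norm_scale)
  finally show ?thesis by (simp add: z_def)
qed
lemma cinner_axis: "cinner (axis j 1) y = cnj (y $ j)"
  unfolding cinner_def axis_def by (simp add: if_distrib[where f="\<lambda>a. a * _"] cong: if_cong)

lemma norm_axis1: "cnorm (axis j (1::complex)) = 1"
  by (simp add: cnorm_eq)

lemma parseval_sum:
  fixes F :: "'m::finite \<Rightarrow> complex ^ 'n"
  assumes "parseval_frame F"
  shows "(\<Sum>i\<in>UNIV. (norm (F i))\<^sup>2) = real CARD('n)"
proof -
  have "\<And>j. (\<Sum>i\<in>UNIV. (cmod (F i $ j))\<^sup>2) = 1"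
  proof -
    fix j
    have "(\<Sum>i\<in>UNIV. (cmod (cinner (axis j 1) (F i)))\<^sup>2) = (cnorm (axis j (1::complex)))\<^sup>2"
      using assms unfolding parseval_frame_def by blast
    then show "(\<Sum>i\<in>UNIV. (cmod (F i $ j))\<^sup>2) = 1" by (simp add: cinner_axis norm_axis1)
  qed
  then have "(\<Sum>j\<in>(UNIV::'n set). \<Sum>i\<in>UNIV. (cmod (F i $ j))\<^sup>2) = real CARD('n)" by simp
  then show ?thesis by (simp add: norm_sq_vec sum.swap[of _ "UNIV::'n set"])
qed

lemma dual_sum:
  fixes F G :: "'m::finite \<Rightarrow> complex ^ 'n"
  assumes "is_dual F G"
  shows "(\<Sum>i\<in>UNIV. cinner (G i) (F i)) = of_nat CARD('n)"
proof -
  have "\<And>j. (\<Sum>i\<in>UNIV. G i $ j * cnj (F i $ j)) = 1"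
  proof -
    fix j
    have "axis j 1 $ j = (\<Sum>i\<in>UNIV. cinner (axis j 1) (F i) *s G i) $ j"
      using assms unfolding is_dual_def by metis
    then show "(\<Sum>i\<in>UNIV. G i $ j * cnj (F i $ j)) = 1"
      by (simp add: sum_component cinner_axis mult.commute)
  qed
  then have "(\<Sum>j\<in>(UNIV::'n set). \<Sum>i\<in>UNIV. G i $ j * cnj (F i $ j)) = of_nat CARD('n)" by simp
  then show ?thesis by (simp add: cinner_def sum.swap[of _ "UNIV::'n set"])
qed

lemma erasure_val: "cinner (erasure_op F G i x) x = cinner x (F i) * cinner (G i) x"
  by (simp add: erasure_op_def cinner_scale_left)

lemma erasure_bound:
  assumes "norm x = 1"
  shows "cmod (cinner (erasure_op F G i x) x) \<le> norm (F i) * norm (G i)"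
proof -
  have "cmod (cinner x (F i)) \<le> norm (F i)" using cauchy[of x "F i"] assms by simp
  moreover have "cmod (cinner (G i) x) \<le> norm (G i)" using cauchy[of "G i" x] assms by simp
  ultimately show ?thesis by (simp add: erasure_val norm_mult mult_mono)
qed

lemma nr_le: "numerical_radius (erasure_op F G i) \<le> norm (F i) * norm (G i)"
  unfolding numerical_radius_def
proof (rule cSUP_least)
  show "{f. cnorm f = 1} \<noteq> {}" using norm_axis1 by blast
qed (simp add: cnorm_eq erasure_bound)

lemma nr_ge:
  assumes "x \<noteq> 0"
  shows "cmod (cinner x (F i) * cinner (G i) x) / (norm x)\<^sup>2 \<le> numerical_radius (erasure_op F G i)"
proof -
  define c where "c = complex_of_real (1 / norm x)"
  define y where "y = c *s x"
  have nx: "norm x > 0" using assms by simp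
  have ny: "cnorm y = 1" using nx by (simp add: cnorm_eq y_def norm_scale c_def norm_divide)
  have "cinner (erasure_op F G i y) y = cinner y (F i) * cinner (G i) y" by (rule erasure_val)
  also have "\<dots> = c * cnj c * (cinner x (F i) * cinner (G i) x)"
    by (simp add: y_def cinner_scale_left cinner_scale_right)
  also have "c * cnj c = complex_of_real (1 / (norm x)\<^sup>2)" by (simp add: c_def power2_eq_square)
  finally have "cmod (cinner (erasure_op F G i y) y) = cmod (cinner x (F i) * cinner (G i) x) / (norm x)\<^sup>2"
    by (simp add: norm_mult norm_divide norm_power)
  moreover have "cmod (cinner (erasure_op F G i y) y) \<le> numerical_radius (erasure_op F G i)"
    unfolding numerical_radius_def
  proof (rule cSUP_upper)
    show "y \<in> {f. cnorm f = 1}" using ny by simp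
    show "bdd_above ((\<lambda>f. cmod (cinner (erasure_op F G i f) f)) ` {f. cnorm f = 1})"
      by (rule bdd_aboveI[where M="norm (F i) * norm (G i)"]) (auto simp: cnorm_eq erasure_bound)
  qed
  ultimately show ?thesis by simp
qed

lemma tangent:
  fixes w m p :: real
  assumes "0 \<le> w" "0 < m" "1 < p"
  shows "m powr p + p * m powr (p - 1) * (w - m) \<le> w powr p"
    and "w \<noteq> m \<Longrightarrow> m powr p + p * m powr (p - 1) * (w - m) < w powr p"
proof -
  define g where "g = (\<lambda>t::real. t powr p - p * m powr (p - 1) * t)"
  define g' where "g' = (\<lambda>t::real. p * t powr (p - 1) - p * m powr (p - 1))"
  have "m powr (p - 1) * m = m powr (p - 1) * m powr 1" using assms by simp
  also have "\<dots> = m powr p" by (simp only: powr_add[symmetric] diff_add_cancel)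
  finally have mp: "m powr (p - 1) * m = m powr p" .
  have dg: "(g has_real_derivative g' t) (at t)" if "0 < t" for t
  proof -
    have "((\<lambda>t. t powr p) has_real_derivative p * t powr (p - 1)) (at t)"
      using that by (rule has_real_derivative_powr)
    then have "((\<lambda>t. t powr p - p * m powr (p - 1) * t) has_real_derivative
        p * t powr (p - 1) - p * m powr (p - 1) * 1) (at t)"
      by (intro DERIV_diff DERIV_cmult DERIV_ident)
    then show ?thesis by (simp add: g_def g'_def)
  qed
  have key: "g m < g w" if "w \<noteq> m" 
  proof (cases "w = 0")
    case True
    have "m powr p > 0" using assms by simp
    have "g m = m powr p - p * (m powr (p - 1) * m)" by (simp add: g_def mult.assoc)
    also have "\<dots> = (1 - p) * m powr p" by (simp only: mp) (simp add: algebra_simps)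
    finally have "g m = (1 - p) * m powr p" .
    moreover have "(1 - p) * m powr p < 0" using \<open>m powr p > 0\<close> assms
      by (simp add: mult_neg_pos)
    moreover have "g w = 0" using True assms by (simp add: g_def)
    ultimately show ?thesis by simp
  next
    case False
    then have wpos: "0 < w" using assms by simp
    show ?thesis
    proof (cases "w < m")
      case True
      have "\<exists>z>w. z < m \<and> g m - g w = (m - w) * g' z"
        by (rule MVT2[OF True]) (rule dg, use wpos in linarith)
      then obtain z where z: "w < z" "z < m" "g m - g w = (m - w) * g' z" by blast
      have "z powr (p - 1) < m powr (p - 1)" using z wpos assms by (intro powr_less_mono2) auto
      then have "g' z < 0" using assms by (simp add: g'_def)
      then have "(m - w) * g' z < 0"
        using True by (intro mult_pos_neg) auto
      then show ?thesis using z by simp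
    next
      case False
      then have mw: "m < w" using \<open>w \<noteq> m\<close> by simp
      have "\<exists>z>m. z < w \<and> g w - g m = (w - m) * g' z"
        by (rule MVT2[OF mw]) (rule dg, use assms in linarith)
      then obtain z where z: "m < z" "z < w" "g w - g m = (w - m) * g' z" by blast
      have "m powr (p - 1) < z powr (p - 1)" using z assms by (intro powr_less_mono2) auto
      then have "g' z > 0" using assms by (simp add: g'_def)
      then have "(w - m) * g' z > 0"
        using mw by (intro mult_pos_pos) auto
      then show ?thesis using z by simp
    qed
  qed
  have eq: "g w - g m = w powr p - (m powr p + p * m powr (p - 1) * (w - m))"
    unfolding g_def by (simp add: right_diff_distrib)
  show "w \<noteq> m \<Longrightarrow> m powr p + p * m powr (p - 1) * (w - m) < w powr p"
    using key eq by simp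
  show "m powr p + p * m powr (p - 1) * (w - m) \<le> w powr p"
  proof (cases "w = m")
    case True then show ?thesis by simp
  next
    case False then show ?thesis using key eq by simp
  qed
qed
lemma parseval_dual:
  fixes F :: "'m::finite \<Rightarrow> complex ^ 'n"
  assumes "parseval_frame F"
  shows "is_dual F F"
proof -
  define A where "A x = (\<Sum>i\<in>UNIV. cinner x (F i) *s F i) - x" for x
  have Aadd: "A (x + y) = A x + A y" for x y
    by (simp add: A_def vec_eq_iff sum_component cinner_add_left distrib_right sum.distrib)
  have Ascale: "A (c *s x) = c *s A x" for c x
    by (simp add: A_def vec_eq_iff sum_component cinner_scale_left sum_distrib_left
        right_diff_distrib mult.assoc)
  have Q: "cinner (A x) x = 0" for x
  proof -
    have "cinner (A x) x = (\<Sum>i\<in>UNIV. cinner x (F i) * cinner (F i) x) - cinner x x"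
      by (simp add: A_def cinner_diff_left cinner_sum_left cinner_scale_left)
    also have "(\<Sum>i\<in>UNIV. cinner x (F i) * cinner (F i) x)
        = (\<Sum>i\<in>UNIV. complex_of_real ((cmod (cinner x (F i)))\<^sup>2))"
      by (intro sum.cong refl) (metis cinner_comm complex_norm_square)
    also have "\<dots> = complex_of_real ((norm x)\<^sup>2)"
    proof -
      have e: "(\<Sum>i\<in>UNIV. (cmod (cinner x (F i)))\<^sup>2) = (norm x)\<^sup>2"
        using assms unfolding parseval_frame_def cnorm_eq by blast
      show ?thesis by (simp only: of_real_sum[symmetric] e)
    qed
    finally show ?thesis by (simp add: cinner_self)
  qed
  have P: "cinner (A x) y = 0" for x y
  proof -
    have "cinner (A (x + y)) (x + y) = 0" by (rule Q)
    then have s1: "cinner (A x) y + cinner (A y) x = 0"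
      using Q[of x] Q[of y]
      by (simp add: Aadd cinner_add_left cinner_add_right) (simp add: add.commute)
    have "cinner (A (x + \<i> *s y)) (x + \<i> *s y) = 0" by (rule Q)
    then have "- \<i> * cinner (A x) y + \<i> * cinner (A y) x = 0"
      using Q[of x] Q[of y]
      by (simp add: Aadd Ascale cinner_add_left cinner_add_right cinner_scale_left cinner_scale_right)
    then have "\<i> * (cinner (A y) x - cinner (A x) y) = 0" by (simp add: algebra_simps)
    then have s2: "cinner (A y) x = cinner (A x) y" by simp
    from s1 s2 show ?thesis by simp
  qed
  show ?thesis unfolding is_dual_def
  proof
    fix x
    have "cinner (A x) (A x) = 0" by (rule P)
    then have "A x = 0" by (simp add: cinner_self)
    then show "x = (\<Sum>i\<in>UNIV. cinner x (F i) *s F i)" by (simp add: A_def)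
  qed
qed

lemma unique_aux:
  assumes apos: "a > 0" and nF: "(norm (F i))\<^sup>2 = a" and z: "cinner (G i) (F i) = complex_of_real a"
    and w: "numerical_radius (erasure_op F G i) \<le> a"
  shows "G i = F i"
proof -
  define h where "h = G i - F i"
  define b where "b = (norm h)\<^sup>2"
  have G: "G i = F i + h" by (simp add: h_def)
  have FF: "cinner (F i) (F i) = complex_of_real a" using nF by (simp add: cinner_self)
  have hF: "cinner h (F i) = 0" using z FF by (simp add: h_def cinner_diff_left)
  have Fh: "cinner (F i) h = 0" using hF cinner_comm[of "F i" h] by simp
  have hh: "cinner h h = complex_of_real b" by (simp add: b_def cinner_self)
  define x where "x = F i + (1/2) *s h"
  have x1: "cinner x (F i) = complex_of_real a"
    by (simp add: x_def cinner_add_left cinner_scale_left hF FF)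
  have x2: "cinner (G i) x = complex_of_real (a + b/2)"
    by (simp add: G x_def cinner_add_left cinner_add_right cinner_scale_right hF Fh FF hh)
  have x3: "complex_of_real ((norm x)\<^sup>2) = complex_of_real (a + b/4)"
    unfolding cinner_self[symmetric]
    by (simp add: x_def cinner_add_left cinner_add_right cinner_scale_right cinner_scale_left hF Fh FF hh)
  then have nx: "(norm x)\<^sup>2 = a + b/4" using of_real_eq_iff by blast
  have b0: "b \<ge> 0" by (simp add: b_def)
  then have "x \<noteq> 0" using nx apos by auto
  from nr_ge[OF this, of F i G] w
  have "cmod (cinner x (F i) * cinner (G i) x) / (norm x)\<^sup>2 \<le> a" by linarith
  moreover have "cinner x (F i) * cinner (G i) x = complex_of_real (a * (a + b/2))"
    using x1 x2 by simp
  moreover have "cmod (complex_of_real (a * (a + b/2))) = a * (a + b/2)"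
    using apos b0 by (simp only: norm_of_real) simp
  ultimately have "a * (a + b/2) / (a + b/4) \<le> a" using nx by simp
  then have "a * (a + b/2) \<le> a * (a + b/4)" using apos b0
    by (simp add: divide_le_eq)
  then have "b \<le> 0" using apos by (simp add: algebra_simps)
  then have "h = 0" using b0 by (simp add: b_def)
  then show ?thesis using G by simp
qed
theorem proposition4p1:
  fixes F :: "'m::finite \<Rightarrow> complex ^ 'n" and p :: real
  assumes "parseval_frame F" and "uniform_frame F" and "p > 1"
  shows "AE1_opt p F = real CARD('n) / real CARD('m) \<and> zeta1 p F = {F}"
proof -
  define N where "N = real CARD('m)"
  define a where "a = real CARD('n) / N"
  have Npos: "N > 0" by (simp add: N_def)
  have apos: "a > 0" using Npos by (simp add: a_def)
  have pp: "p > 0" using assms(3) by simp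
  have normF: "(norm (F i))\<^sup>2 = a" for i
  proof -
    have "(\<Sum>j\<in>UNIV. (norm (F j))\<^sup>2) = (\<Sum>j\<in>(UNIV::'m set). (norm (F i))\<^sup>2)"
      using assms(2) unfolding uniform_frame_def cnorm_eq by metis
    then have "N * (norm (F i))\<^sup>2 = real CARD('n)"
      using parseval_sum[OF assms(1)] by (simp add: N_def)
    then show ?thesis using Npos by (simp add: a_def field_simps)
  qed
  have FF: "cinner (F i) (F i) = complex_of_real a" for i by (simp add: cinner_self normF)
  have Fnz: "F i \<noteq> 0" for i using normF[of i] apos by auto
  define w where "w G i = numerical_radius (erasure_op F G i)" for G i
  have wge: "cmod (cinner (G i) (F i)) \<le> w G i" for G i
  proof -
    have "cmod (cinner (F i) (F i) * cinner (G i) (F i)) / (norm (F i))\<^sup>2 \<le> w G i"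
      unfolding w_def by (rule nr_ge[OF Fnz])
    then show ?thesis using apos by (simp add: FF normF norm_mult)
  qed
  have wnn: "w G i \<ge> 0" for G i using wge[of G i] norm_ge_zero order_trans by blast
  have AE1_w: "AE1 p F G = ((1 / N) * (\<Sum>i\<in>UNIV. w G i powr p)) powr (1 / p)" for G
    by (simp add: AE1_def w_def N_def)
  define T where "T G = (\<Sum>i\<in>UNIV. a powr p + p * a powr (p - 1) * (w G i - a))" for G
  have sumw: "real CARD('n) \<le> (\<Sum>i\<in>UNIV. w G i)" if "is_dual F G" for G
  proof -
    have "real CARD('n) = cmod (\<Sum>i\<in>UNIV. cinner (G i) (F i))"
      using dual_sum[OF that] by simp
    also have "\<dots> \<le> (\<Sum>i\<in>UNIV. cmod (cinner (G i) (F i)))" by (rule norm_sum)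
    also have "\<dots> \<le> (\<Sum>i\<in>UNIV. w G i)" by (intro sum_mono wge)
    finally show ?thesis .
  qed
  have Tge: "N * a powr p \<le> T G" if "is_dual F G" for G
  proof -
    have "T G = N * a powr p + p * a powr (p - 1) * ((\<Sum>i\<in>UNIV. w G i) - N * a)"
      unfolding T_def sum.distrib sum_distrib_left[symmetric] sum_subtractf by (simp add: N_def)
    moreover have "N * a = real CARD('n)" using Npos by (simp add: a_def)
    moreover have "p * a powr (p - 1) \<ge> 0" using pp by simp
    ultimately show ?thesis using sumw[OF that] by (simp add: mult_nonneg_nonneg)
  qed
  have TS: "T G \<le> (\<Sum>i\<in>UNIV. w G i powr p)" for G
    unfolding T_def by (intro sum_mono tangent(1)[OF wnn apos assms(3)])
  have lower: "a \<le> AE1 p F G" if "is_dual F G" for G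
  proof -
    have "a powr p \<le> (1 / N) * (\<Sum>i\<in>UNIV. w G i powr p)"
      using Tge[OF that] TS[of G] Npos by (simp add: field_simps)
    then have "(a powr p) powr (1 / p) \<le> ((1 / N) * (\<Sum>i\<in>UNIV. w G i powr p)) powr (1 / p)"
      using pp apos by (intro powr_mono2) auto
    then show ?thesis using apos pp by (simp add: AE1_w powr_powr)
  qed
  have dF: "is_dual F F" by (rule parseval_dual[OF assms(1)])
  have wF: "w F i = a" for i
  proof -
    have "w F i \<le> a" unfolding w_def using nr_le[of F F i] normF[of i]
      by (simp add: power2_eq_square)
    moreover have "a \<le> w F i" using wge[of F i] apos by (simp add: FF)
    ultimately show ?thesis by simp
  qed
  have AEF: "AE1 p F F = a"
    using Npos apos pp by (simp add: AE1_w wF N_def powr_powr)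
  have opt: "AE1_opt p F = a"
    unfolding AE1_opt_def
    by (rule cInf_eq_minimum) (use dF AEF lower in auto)
  have uniq: "G = F" if dG: "is_dual F G" and eqG: "AE1 p F G = a" for G
  proof -
    define S where "S = (\<Sum>i\<in>UNIV. w G i powr p)"
    have S0: "S \<ge> 0" unfolding S_def by (intro sum_nonneg) simp
    have "((1 / N) * S) powr (1 / p) = a" using eqG by (simp add: AE1_w S_def)
    then have "(((1 / N) * S) powr (1 / p)) powr p = a powr p" by simp
    then have "(1 / N) * S = a powr p" using pp S0 Npos by (simp add: powr_powr)
    then have SN: "S = N * a powr p" using Npos by (simp add: field_simps)
    have wa: "w G i = a" for i
    proof (rule ccontr)
      assume ne: "w G i \<noteq> a"
      have "T G < S" unfolding T_def S_def
      proof (rule sum_strict_mono_ex1)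
        show "\<forall>x\<in>UNIV. a powr p + p * a powr (p - 1) * (w G x - a) \<le> w G x powr p"
          using tangent(1)[OF wnn apos assms(3)] by blast
        show "\<exists>x\<in>UNIV. a powr p + p * a powr (p - 1) * (w G x - a) < w G x powr p"
          using tangent(2)[OF wnn apos assms(3) ne] by blast
      qed simp
      then show False using Tge[OF dG] SN by simp
    qed
    define z where "z i = cinner (G i) (F i)" for i
    have za: "cmod (z i) \<le> a" for i using wge[of G i] wa[of i] by (simp add: z_def)
    have zsum: "(\<Sum>i\<in>UNIV. Re (z i)) = N * a"
    proof -
      have "(\<Sum>i\<in>UNIV. z i) = of_nat CARD('n)" using dual_sum[OF dG] by (simp add: z_def)
      then have "Re (\<Sum>i\<in>UNIV. z i) = real CARD('n)" by simp
      then show ?thesis using Npos by (simp add: a_def)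
    qed
    have Rez: "Re (z i) = a" for i
    proof (rule ccontr)
      assume ne: "Re (z i) \<noteq> a"
      have le: "Re (z j) \<le> a" for j using za[of j] complex_Re_le_cmod order_trans by blast
      have "(\<Sum>j\<in>UNIV. Re (z j)) < (\<Sum>j\<in>(UNIV::'m set). a)"
      proof (rule sum_strict_mono_ex1)
        show "\<forall>x\<in>UNIV. Re (z x) \<le> a" using le by blast
        show "\<exists>x\<in>UNIV. Re (z x) < a" proof
          show "Re (z i) < a" using le[of i] ne by simp
        qed simp
      qed simp
      then show False using zsum by (simp add: N_def)
    qed
    have zeq: "z i = complex_of_real a" for i
    proof -
      have "(cmod (z i))\<^sup>2 \<le> a\<^sup>2" using za[of i] by (simp add: power_mono)
      then have "(Re (z i))\<^sup>2 + (Im (z i))\<^sup>2 \<le> a\<^sup>2" by (simp add: cmod_power2)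
      then have "Im (z i) = 0" using Rez[of i] by simp
      then show ?thesis using Rez[of i] by (simp add: complex_eq_iff)
    qed
    show "G = F"
    proof
      fix i
      show "G i = F i"
        by (rule unique_aux[where F=F and G=G and i=i, OF apos normF[of i]]) (use zeq[of i] wa[of i] in \<open>auto simp: z_def w_def\<close>)
    qed
  qed
  have "zeta1 p F = {F}"
    unfolding zeta1_def using uniq dF AEF opt by auto
  then show ?thesis using opt by (simp add: a_def N_def)
qed

end
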